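(* For $0\le\alpha,\beta\le d$, with $s_0=z$ and $s_\alpha=(1+w_\alpha v_\alpha)\cdots(1+w_1v_1)z$ for $\alpha\geq1$, $$\{\!\{s_\alpha,s_\beta\}\!\}=\tfrac12(e_0\otimes s_\alpha s_\beta-s_\beta s_\alpha\otimes e_0)+\tfrac12o(\alpha,\beta)(s_\beta\otimes s_\alpha-s_\alpha\otimes s_\beta).$$
   Context: Fix $d\ge1$; $o(\alpha,\beta)=0,1,-1$ according as $\alpha=\beta,\alpha<\beta,\alpha>\beta$. Let $\mathbb C\bar Q$ be the path algebra generated by orthogonal idempotents $e_0,e_\infty$ with $e_0+e_\infty=1$ and arrows $x,y$ (loops at vertex $0$: $x=e_0xe_0$, $y=e_0ye_0$), $v_\alpha=e_\infty v_\alpha e_0$, $w_\alpha=e_0w_\alpha e_\infty$ ($\alpha=1,\dots,d$); paths are written left to right. Let $\mathcal A^\times$ be obtained by formally inverting $1+xy,1+yx,1+w_\alpha v_\alpha,1+v_\alpha w_\alpha$ and adjoining $x^{-1}=e_0x^{-1}e_0$ with $xx^{-1}=x^{-1}x=e_0$; put $z=y+x^{-1}$ (invertible in $e_0\mathcal A^\times e_0$). A double bracket is a bilinear map $\{\!\{-,-\}\!\}:\mathcal A^\times\times\mathcal A^\times\to\mathcal A^\times\otimes\mathcal A^\times$ with $\{\!\{a,b\}\!\}=-\{\!\{b,a\}\!\}^\circ$ ($(u\otimes v)^\circ=v\otimes u$) and $\{\!\{a,bc\}\!\}=b\{\!\{a,c\}\!\}+\{\!\{a,b\}\!\}c$ for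 the outer bimodule structure $b(u\otimes v)c=bu\otimes vc$. The double bracket used is the unique one vanishing on $e_0,e_\infty$ with $\{\!\{x,x\}\!\}=\tfrac12(x^2\otimes e_0-e_0\otimes x^2)$, $\{\!\{y,y\}\!\}=\tfrac12(e_0\otimes y^2-y^2\otimes e_0)$, $\{\!\{x,y\}\!\}=e_0\otimes e_0+\tfrac12(yx\otimes e_0+e_0\otimes xy+y\otimes x-x\otimes y)$, $\{\!\{u,w_\alpha\}\!\}=\tfrac12(e_0\otimes uw_\alpha-u\otimes w_\alpha)$, $\{\!\{u,v_\alpha\}\!\}=\tfrac12(v_\alpha u\otimes e_0-v_\alpha\otimes u)$ for $u\in\{x,y\}$, $\{\!\{v_\alpha,v_\beta\}\!\}=\tfrac12o(\beta,\alpha)(v_\alpha\otimes v_\beta+v_\beta\otimes v_\alpha)$, $\{\!\{w_\alpha,w_\beta\}\!\}=\tfrac12o(\beta,\alpha)(w_\alpha\otimes w_\beta+w_\beta\otimes w_\alpha)$, $\{\!\{v_\alpha,w_\beta\}\!\}=\delta_{\alpha\beta}(e_0\otimes e_\infty+\tfrac12w_\alpha v_\alpha\otimes e_\infty+\tfrac12e_0\otimes v_\alpha w_\alpha)+\tfrac12o(\alpha,\beta)(e_0\otimes v_\alpha w_\beta+w_\beta v_\alpha\otimes e_\infty)$, extended uniquely to $\mathcal A^\times$ (it also satisfies $\{\!\{bc,a\}\!\}=\{\!\{b,a\}\!\}'c\otimes\{\!\{b,a\}\!\}''+\{\!\{c,a\}\!\}'\otimes b\{\!\{c,a\}\!\}''$).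 *)

theory Defs
  imports Main "HOL.Real_Vector_Spaces"
begin

definition osgn :: "nat \<Rightarrow> nat \<Rightarrow> real" where
  "osgn a b = (if a = b then 0 else if a < b then 1 else -1)"

fun s_elem :: "(nat \<Rightarrow> 'a::ring_1) \<Rightarrow> (nat \<Rightarrow> 'a) \<Rightarrow> 'a \<Rightarrow> nat \<Rightarrow> 'a" where
  "s_elem w v z 0 = z"
| "s_elem w v z (Suc n) = (1 + w (Suc n) * v (Suc n)) * s_elem w v z n"

text \<open>An abstract model of the tensor square A (x) A of an algebra A:
  a real vector space T with a bilinear map tens (u (x) v), the outer bimodule
  structure b (u (x) v) c = bu (x) vc, and the flip (u (x) v)^o = v (x) u.\<close>
definition tensor_square ::
  "('a::real_algebra_1 \<Rightarrow> 'a \<Rightarrow> 't::real_vector) \<Rightarrow> ('a \<Rightarrow> 't \<Rightarrow> 't) \<Rightarrow> ('t \<Rightarrow> 'a \<Rightarrow> 't)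
   \<Rightarrow> ('t \<Rightarrow> 't) \<Rightarrow> bool" where
  "tensor_square tens lm rm sw \<longleftrightarrow>
     (\<forall>u u' v. tens (u + u') v = tens u v + tens u' v) \<and>
     (\<forall>u v v'. tens u (v + v') = tens u v + tens u v') \<and>
     (\<forall>r u v. tens (r *\<^sub>R u) v = r *\<^sub>R tens u v) \<and>
     (\<forall>r u v. tens u (r *\<^sub>R v) = r *\<^sub>R tens u v) \<and>
     (\<forall>b X Y. lm b (X + Y) = lm b X + lm b Y) \<and>
     (\<forall>b b' X. lm (b + b') X = lm b X + lm b' X) \<and>
     (\<forall>r b X. lm b (r *\<^sub>R X) = r *\<^sub>R lm b X) \<and>
     (\<forall>r b X. lm (r *\<^sub>R b) X = r *\<^sub>R lm b X) \<and>
     (\<forall>b b' X. lm (b * b') X = lm b (lm b' X)) \<and>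
     (\<forall>X. lm 1 X = X) \<and>
     (\<forall>c X Y. rm (X + Y) c = rm X c + rm Y c) \<and>
     (\<forall>c c' X. rm X (c + c') = rm X c + rm X c') \<and>
     (\<forall>r c X. rm (r *\<^sub>R X) c = r *\<^sub>R rm X c) \<and>
     (\<forall>r c X. rm X (r *\<^sub>R c) = r *\<^sub>R rm X c) \<and>
     (\<forall>c c' X. rm X (c * c') = rm (rm X c) c') \<and>
     (\<forall>X. rm X 1 = X) \<and>
     (\<forall>b c X. rm (lm b X) c = lm b (rm X c)) \<and>
     (\<forall>b u v. lm b (tens u v) = tens (b * u) v) \<and>
     (\<forall>c u v. rm (tens u v) c = tens u (v * c)) \<and>
     (\<forall>X Y. sw (X + Y) = sw X + sw Y) \<and>
     (\<forall>r X. sw (r *\<^sub>R X) = r *\<^sub>R sw X) \<and>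
     (\<forall>X. sw (sw X) = X) \<and>
     (\<forall>u v. sw (tens u v) = tens v u)"

text \<open>Relations of the localised path algebra A^x: idempotents e0, einf, loops x, y at 0,
  arrows v_a : 0 -> inf, w_a : inf -> 0, the inverse xi of x in e0 A e0, and invertibility
  of 1+xy, 1+yx, 1+w_a v_a, 1+v_a w_a.\<close>
definition path_algebra_data ::
  "nat \<Rightarrow> 'a::ring_1 \<Rightarrow> 'a \<Rightarrow> 'a \<Rightarrow> 'a \<Rightarrow> 'a \<Rightarrow> (nat \<Rightarrow> 'a) \<Rightarrow> (nat \<Rightarrow> 'a) \<Rightarrow> bool" where
  "path_algebra_data d e0 einf x y xi v w \<longleftrightarrow>
     e0 + einf = 1 \<and> e0 * e0 = e0 \<and> einf * einf = einf \<and> e0 * einf = 0 \<and> einf * e0 = 0 \<and>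
     x = e0 * x * e0 \<and> y = e0 * y * e0 \<and>
     (\<forall>a\<in>{1..d}. v a = einf * v a * e0 \<and> w a = e0 * w a * einf) \<and>
     xi = e0 * xi * e0 \<and> x * xi = e0 \<and> xi * x = e0 \<and>
     (\<exists>i. (1 + x * y) * i = 1 \<and> i * (1 + x * y) = 1) \<and>
     (\<exists>i. (1 + y * x) * i = 1 \<and> i * (1 + y * x) = 1) \<and>
     (\<forall>a\<in>{1..d}. \<exists>i. (1 + w a * v a) * i = 1 \<and> i * (1 + w a * v a) = 1) \<and>
     (\<forall>a\<in>{1..d}. \<exists>i. (1 + v a * w a) * i = 1 \<and> i * (1 + v a * w a) = 1)"

definition double_bracket ::
  "nat \<Rightarrow> 'a::real_algebra_1 \<Rightarrow> 'a \<Rightarrow> 'a \<Rightarrow> 'a \<Rightarrow> (nat \<Rightarrow> 'a) \<Rightarrow> (nat \<Rightarrow> 'a)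
   \<Rightarrow> ('a \<Rightarrow> 'a \<Rightarrow> 't::real_vector) \<Rightarrow> ('a \<Rightarrow> 't \<Rightarrow> 't) \<Rightarrow> ('t \<Rightarrow> 'a \<Rightarrow> 't) \<Rightarrow> ('t \<Rightarrow> 't)
   \<Rightarrow> ('a \<Rightarrow> 'a \<Rightarrow> 't) \<Rightarrow> bool" where
  "double_bracket d e0 einf x y v w tens lm rm sw br \<longleftrightarrow>
     (\<forall>a a' b. br (a + a') b = br a b + br a' b) \<and>
     (\<forall>a b b'. br a (b + b') = br a b + br a b') \<and>
     (\<forall>r a b. br (r *\<^sub>R a) b = r *\<^sub>R br a b) \<and>
     (\<forall>r a b. br a (r *\<^sub>R b) = r *\<^sub>R br a b) \<and>
     (\<forall>a b. br a b = - sw (br b a)) \<and>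
     (\<forall>a b c. br a (b * c) = lm b (br a c) + rm (br a b) c) \<and>
     (\<forall>a. br a e0 = 0 \<and> br a einf = 0 \<and> br e0 a = 0 \<and> br einf a = 0) \<and>
     br x x = (1/2) *\<^sub>R (tens (x * x) e0 - tens e0 (x * x)) \<and>
     br y y = (1/2) *\<^sub>R (tens e0 (y * y) - tens (y * y) e0) \<and>
     br x y = tens e0 e0 + (1/2) *\<^sub>R (tens (y * x) e0 + tens e0 (x * y) + tens y x - tens x y) \<and>
     (\<forall>u\<in>{x, y}. \<forall>a\<in>{1..d}.
        br u (w a) = (1/2) *\<^sub>R (tens e0 (u * w a) - tens u (w a)) \<and>
        br u (v a) = (1/2) *\<^sub>R (tens (v a * u) e0 - tens (v a) u)) \<and>
     (\<forall>a\<in>{1..d}. \<forall>b\<in>{1..d}.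
        br (v a) (v b) = ((1/2) * osgn b a) *\<^sub>R (tens (v a) (v b) + tens (v b) (v a)) \<and>
        br (w a) (w b) = ((1/2) * osgn b a) *\<^sub>R (tens (w a) (w b) + tens (w b) (w a)) \<and>
        br (v a) (w b) =
          (if a = b then tens e0 einf + (1/2) *\<^sub>R tens (w a * v a) einf
                         + (1/2) *\<^sub>R tens e0 (v a * w a) else 0)
          + ((1/2) * osgn a b) *\<^sub>R (tens e0 (v a * w b) + tens (w b * v a) einf))"

end

theory Submission imports Defs begin

definition F :: "('a::real_algebra_1 \<Rightarrow> 'a \<Rightarrow> 't::real_vector) \<Rightarrow> 'a \<Rightarrow> real \<Rightarrow> real \<Rightarrow> real \<Rightarrow> real \<Rightarrow> 'a \<Rightarrow> 'a \<Rightarrow> 't" where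
 "F tens e0 p q r s a b = p *\<^sub>R tens e0 (a*b) + q *\<^sub>R tens (b*a) e0 + r *\<^sub>R tens a b + s *\<^sub>R tens b a"

lemma dbl: "(2::real) *\<^sub>R (A::'t::real_vector) = 2 *\<^sub>R B \<Longrightarrow> A = B" by simp

locale setting =
  fixes d :: nat
    and e0 einf x y xi :: "'a::real_algebra_1"
    and v w :: "nat \<Rightarrow> 'a"
    and tens :: "'a \<Rightarrow> 'a \<Rightarrow> 't::real_vector"
    and lm :: "'a \<Rightarrow> 't \<Rightarrow> 't" and rm :: "'t \<Rightarrow> 'a \<Rightarrow> 't" and sw :: "'t \<Rightarrow> 't"
    and br :: "'a \<Rightarrow> 'a \<Rightarrow> 't"
  assumes TS: "tensor_square tens lm rm sw"
    and PA: "path_algebra_data d e0 einf x y xi v w"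
    and DB: "double_bracket d e0 einf x y v w tens lm rm sw br"
begin

lemma tens_addL[simp]: "tens (u + u') q = tens u q + tens u' q" using TS unfolding tensor_square_def by metis
lemma tens_addR[simp]: "tens u (q + q') = tens u q + tens u q'" using TS unfolding tensor_square_def by metis
lemma tens_scL[simp]: "tens (r *\<^sub>R u) q = r *\<^sub>R tens u q" using TS unfolding tensor_square_def by metis
lemma tens_scR[simp]: "tens u (r *\<^sub>R q) = r *\<^sub>R tens u q" using TS unfolding tensor_square_def by metis
lemma lm_add[simp]: "lm b (X + Y) = lm b X + lm b Y" using TS unfolding tensor_square_def by metis
lemma lm_sc[simp]: "lm b (r *\<^sub>R X) = r *\<^sub>R lm b X" using TS unfolding tensor_square_def by metis
lemma lm_tens[simp]: "lm b (tens u q) = tens (b * u) q" using TS unfolding tensor_square_def by metis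
lemma lm_addL: "lm (b + b') X = lm b X + lm b' X" using TS unfolding tensor_square_def by metis
lemma lm_mult: "lm (b * b') X = lm b (lm b' X)" using TS unfolding tensor_square_def by metis
lemma rm_add[simp]: "rm (X + Y) c = rm X c + rm Y c" using TS unfolding tensor_square_def by metis
lemma rm_sc[simp]: "rm (r *\<^sub>R X) c = r *\<^sub>R rm X c" using TS unfolding tensor_square_def by metis
lemma rm_tens[simp]: "rm (tens u q) c = tens u (q * c)" using TS unfolding tensor_square_def by metis
lemma sw_add[simp]: "sw (X + Y) = sw X + sw Y" using TS unfolding tensor_square_def by metis
lemma sw_sc[simp]: "sw (r *\<^sub>R X) = r *\<^sub>R sw X" using TS unfolding tensor_square_def by metis
lemma sw_tens[simp]: "sw (tens u q) = tens q u" using TS unfolding tensor_square_def by metis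

lemma tens_minusL[simp]: "tens (- u) q = - tens u q" using tens_scL[of "-1" u q] by simp
lemma tens_minusR[simp]: "tens u (- q) = - tens u q" using tens_scR[of u "-1" q] by simp
lemma tens_diffL[simp]: "tens (u - u') q = tens u q - tens u' q" using tens_addL[of u "-u'" q] by simp
lemma tens_diffR[simp]: "tens u (q - q') = tens u q - tens u q'" using tens_addR[of u q "-q'"] by simp
lemma tens_0L[simp]: "tens 0 q = 0" using tens_scL[of 0 0 q] by simp
lemma tens_0R[simp]: "tens u 0 = 0" using tens_scR[of u 0 0] by simp
lemma lm_minus[simp]: "lm b (- X) = - lm b X" using lm_sc[of b "-1" X] by simp
lemma lm_diff[simp]: "lm b (X - Y) = lm b X - lm b Y" using lm_add[of b X "-Y"] by simp
lemma lm_0[simp]: "lm b 0 = 0" using lm_sc[of b 0 0] by simp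
lemma rm_minus[simp]: "rm (- X) c = - rm X c" using rm_sc[of "-1" X c] by simp
lemma rm_diff[simp]: "rm (X - Y) c = rm X c - rm Y c" using rm_add[of X "-Y" c] by simp
lemma rm_0[simp]: "rm 0 c = 0" using rm_sc[of 0 0 c] by simp
lemma sw_minus[simp]: "sw (- X) = - sw X" using sw_sc[of "-1" X] by simp
lemma sw_diff[simp]: "sw (X - Y) = sw X - sw Y" using sw_add[of X "-Y"] by simp
lemma sw_0[simp]: "sw 0 = 0" using sw_sc[of 0 0] by simp

lemma br_addL[simp]: "br (a + a') b = br a b + br a' b" using DB unfolding double_bracket_def by metis
lemma br_addR[simp]: "br a (b + b') = br a b + br a b'" using DB unfolding double_bracket_def by metis
lemma br_anti: "br a b = - sw (br b a)" using DB unfolding double_bracket_def by metis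
lemma br_der: "br a (b * c) = lm b (br a c) + rm (br a b) c" using DB unfolding double_bracket_def by metis
lemma br_e0[simp]: "br a e0 = 0" "br a einf = 0" "br e0 a = 0" "br einf a = 0" using DB unfolding double_bracket_def by metis+

lemma br_derL: "br (a * b) c = sw (lm a (sw (br b c))) + sw (rm (sw (br a c)) b)"
proof -
  have "br (a*b) c = - sw (br c (a*b))" by (rule br_anti)
  also have "\<dots> = - sw (lm a (br c b) + rm (br c a) b)" by (simp add: br_der)
  also have "\<dots> = sw (lm a (sw (br b c))) + sw (rm (sw (br a c)) b)"
    by (subst br_anti[of c b], subst br_anti[of c a], simp)
  finally show ?thesis .
qed

lemma F_first:
  assumes "br a c = F tens e0 p1 q1 r1 s1 a c" "br b c = F tens e0 p2 q2 r2 s2 b c"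
  shows "br (a*b) c = p1 *\<^sub>R tens (e0*b) (a*c) + q1 *\<^sub>R tens (c*a*b) e0 + r1 *\<^sub>R tens (a*b) c + s1 *\<^sub>R tens (c*b) a
     + p2 *\<^sub>R tens e0 (a*b*c) + q2 *\<^sub>R tens (c*b) (a*e0) + r2 *\<^sub>R tens b (a*c) + s2 *\<^sub>R tens c (a*b)"
  unfolding br_derL assms F_def by (simp add: algebra_simps)


lemma F_second:
  assumes "br c a = F tens e0 p1 q1 r1 s1 c a" "br c b = F tens e0 p2 q2 r2 s2 c b"
  shows "br c (a*b) = p2 *\<^sub>R tens (a*e0) (c*b) + q2 *\<^sub>R tens (a*b*c) e0 + r2 *\<^sub>R tens (a*c) b + s2 *\<^sub>R tens (a*b) c
    + p1 *\<^sub>R tens e0 (c*a*b) + q1 *\<^sub>R tens (a*c) (e0*b) + r1 *\<^sub>R tens c (a*b) + s1 *\<^sub>R tens a (c*b)"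
  unfolding br_der assms F_def by (simp add: algebra_simps)

lemma F_first_c:
  assumes "br a c = F tens e0 p1 q1 r1 s1 a c" "br b c = F tens e0 p2 q2 r2 s2 b c"
    and "e0 * b = b" "a * e0 = a"
  shows "br (a*b) c = F tens e0 p2 q1 r1 s2 (a*b) c + (p1+r2) *\<^sub>R tens b (a*c) + (s1+q2) *\<^sub>R tens (c*b) a"
  unfolding F_first[OF assms(1,2)] F_def using assms(3,4) by (simp add: algebra_simps)

lemma F_second_c:
  assumes "br c a = F tens e0 p1 q1 r1 s1 c a" "br c b = F tens e0 p2 q2 r2 s2 c b"
    and "e0 * b = b" "a * e0 = a"
  shows "br c (a*b) = F tens e0 p1 q2 r1 s2 c (a*b) + (p2+s1) *\<^sub>R tens a (c*b) + (r2+q1) *\<^sub>R tens (a*c) b"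
  unfolding F_second[OF assms(1,2)] F_def using assms(3,4) by (simp add: algebra_simps)

lemma F_anti:
  assumes "br a b = F tens e0 p q r s a b"
  shows "br b a = F tens e0 (-q) (-p) (-r) (-s) b a"
  by (subst br_anti, simp add: assms F_def algebra_simps)

lemma F_addL: "F tens e0 p q r s (a + a') b = F tens e0 p q r s a b + F tens e0 p q r s a' b"
  by (simp add: F_def algebra_simps)
lemma F_addR: "F tens e0 p q r s a (b + b') = F tens e0 p q r s a b + F tens e0 p q r s a b'"
  by (simp add: F_def algebra_simps)




lemma DB_gen: "br x x = (1/2) *\<^sub>R (tens (x * x) e0 - tens e0 (x * x)) \<and>
     br y y = (1/2) *\<^sub>R (tens e0 (y * y) - tens (y * y) e0) \<and>
     br x y = tens e0 e0 + (1/2) *\<^sub>R (tens (y * x) e0 + tens e0 (x * y) + tens y x - tens x y) \<and>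
     (\<forall>u\<in>{x, y}. \<forall>a\<in>{1..d}.
        br u (w a) = (1/2) *\<^sub>R (tens e0 (u * w a) - tens u (w a)) \<and>
        br u (v a) = (1/2) *\<^sub>R (tens (v a * u) e0 - tens (v a) u)) \<and>
     (\<forall>a\<in>{1..d}. \<forall>b\<in>{1..d}.
        br (v a) (v b) = ((1/2) * osgn b a) *\<^sub>R (tens (v a) (v b) + tens (v b) (v a)) \<and>
        br (w a) (w b) = ((1/2) * osgn b a) *\<^sub>R (tens (w a) (w b) + tens (w b) (w a)) \<and>
        br (v a) (w b) =
          (if a = b then tens e0 einf + (1/2) *\<^sub>R tens (w a * v a) einf
                         + (1/2) *\<^sub>R tens e0 (v a * w a) else 0)
          + ((1/2) * osgn a b) *\<^sub>R (tens e0 (v a * w b) + tens (w b * v a) einf))"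
  using DB unfolding double_bracket_def by (elim conjE) (intro conjI; assumption)

lemma br_xx: "br x x = (1/2) *\<^sub>R (tens (x * x) e0 - tens e0 (x * x))"
  using DB_gen by blast
lemma br_yy: "br y y = (1/2) *\<^sub>R (tens e0 (y * y) - tens (y * y) e0)"
  using DB_gen by blast
lemma br_xy: "br x y = tens e0 e0 + (1/2) *\<^sub>R (tens (y * x) e0 + tens e0 (x * y) + tens y x - tens x y)"
  using DB_gen by blast
lemma br_uw: "u \<in> {x, y} \<Longrightarrow> a \<in> {1..d} \<Longrightarrow> br u (w a) = (1/2) *\<^sub>R (tens e0 (u * w a) - tens u (w a))"
  using DB_gen by blast
lemma br_uv: "u \<in> {x, y} \<Longrightarrow> a \<in> {1..d} \<Longrightarrow> br u (v a) = (1/2) *\<^sub>R (tens (v a * u) e0 - tens (v a) u)"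
  using DB_gen by blast
lemma br_vv: "a \<in> {1..d} \<Longrightarrow> b \<in> {1..d} \<Longrightarrow> br (v a) (v b) = ((1/2) * osgn b a) *\<^sub>R (tens (v a) (v b) + tens (v b) (v a))"
  using DB_gen by blast
lemma br_ww: "a \<in> {1..d} \<Longrightarrow> b \<in> {1..d} \<Longrightarrow> br (w a) (w b) = ((1/2) * osgn b a) *\<^sub>R (tens (w a) (w b) + tens (w b) (w a))"
  using DB_gen by blast
lemma br_vw: "a \<in> {1..d} \<Longrightarrow> b \<in> {1..d} \<Longrightarrow> br (v a) (w b) =
          (if a = b then tens e0 einf + (1/2) *\<^sub>R tens (w a * v a) einf
                         + (1/2) *\<^sub>R tens e0 (v a * w a) else 0)
          + ((1/2) * osgn a b) *\<^sub>R (tens e0 (v a * w b) + tens (w b * v a) einf)"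
  using DB_gen by blast

lemma e0e0[simp]: "e0 * e0 = e0" "einf * einf = einf" "e0 * einf = 0" "einf * e0 = 0"
  using PA unfolding path_algebra_data_def by auto
lemma e0e0'[simp]: "e0 * (e0 * z) = e0 * z" "einf * (einf * z) = einf * z" "e0 * (einf * z) = 0" "einf * (e0 * z) = 0"
  by (simp_all add: mult.assoc[symmetric])
lemma one_eq: "1 = e0 + einf" using PA unfolding path_algebra_data_def by auto

lemma corner_gen: assumes "c = e0 * c * e0" shows "e0 * c = c" "c * e0 = c"
proof -
  have "e0 * c = e0 * (e0 * c * e0)" using assms by (rule arg_cong)
  also have "\<dots> = e0 * c * e0" by (simp add: mult.assoc[symmetric])
  finally show "e0 * c = c" using assms by simp
  have "c * e0 = (e0 * c * e0) * e0" using assms by (rule arg_cong)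
  also have "\<dots> = e0 * c * e0" by (simp add: mult.assoc)
  finally show "c * e0 = c" using assms by simp
qed

lemma xc[simp]: "e0 * x = x" "x * e0 = x" "e0 * y = y" "y * e0 = y" "e0 * xi = xi" "xi * e0 = xi"
  using PA unfolding path_algebra_data_def by (metis corner_gen)+
lemma xinv[simp]: "x * xi = e0" "xi * x = e0" using PA unfolding path_algebra_data_def by auto
lemma xc'[simp]: "e0 * (x * z) = x * z" "x * (e0 * z) = x * z" "e0 * (y * z) = y * z" "y * (e0 * z) = y * z"
   "e0 * (xi * z) = xi * z" "xi * (e0 * z) = xi * z" "x * (xi * z) = e0 * z" "xi * (x * z) = e0 * z"
  by (simp_all add: mult.assoc[symmetric])

lemma wv_gen: assumes "a \<in> {1..d}" shows "v a = einf * v a * e0" "w a = e0 * w a * einf"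
  using PA assms unfolding path_algebra_data_def by auto

lemma wvc[simp]: assumes "a \<in> {1..d}" shows "e0 * w a = w a" "w a * einf = w a" "w a * e0 = 0" "einf * w a = 0"
  "einf * v a = v a" "v a * e0 = v a" "v a * einf = 0" "e0 * v a = 0"
proof -
  have W: "w a = e0 * w a * einf" and V: "v a = einf * v a * e0" using wv_gen assms by auto
  show "e0 * w a = w a" by (subst (2) W, subst W, simp add: mult.assoc[symmetric])
  show "w a * einf = w a" by (subst (2) W, subst W, simp add: mult.assoc)
  show "w a * e0 = 0" by (subst W, simp add: mult.assoc)
  show "einf * w a = 0" by (subst W, simp add: mult.assoc[symmetric])
  show "einf * v a = v a" by (subst (2) V, subst V, simp add: mult.assoc[symmetric])
  show "v a * e0 = v a" by (subst (2) V, subst V, simp add: mult.assoc)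
  show "v a * einf = 0" by (subst V, simp add: mult.assoc)
  show "e0 * v a = 0" by (subst V, simp add: mult.assoc[symmetric])
qed

lemma wvc'[simp]: assumes "a \<in> {1..d}" shows "e0 * (w a * z) = w a * z" "w a * (einf * z) = w a * z" "w a * (e0 * z) = 0" "einf * (w a * z) = 0"
  "einf * (v a * z) = v a * z" "v a * (e0 * z) = v a * z" "v a * (einf * z) = 0" "e0 * (v a * z) = 0"
  using assms by (simp_all add: mult.assoc[symmetric])


lemma br_wv: "br (w a) (v b) = - sw (br (v b) (w a))" by (rule br_anti)

lemma G_tt: assumes "a \<in> {1..d}"
  shows "br (e0 + w a * v a) (e0 + w a * v a) = F tens e0 (1/2) (-1/2) 0 0 (e0 + w a * v a) (e0 + w a * v a)"
  apply (rule dbl)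
  using assms
  apply (simp add: br_der br_derL br_wv br_vv br_ww br_vw osgn_def F_def algebra_simps scaleR_2)
  done


lemma G_tt2: assumes "a \<in> {1..d}" "b \<in> {1..d}" "b < a"
  shows "br (e0 + w a * v a) (e0 + w b * v b) = F tens e0 (-1/2) (-1/2) (1/2) (1/2) (e0 + w a * v a) (e0 + w b * v b)"
  apply (rule dbl)
  using assms
  apply (simp add: br_der br_derL br_wv br_vv br_ww br_vw osgn_def F_def algebra_simps scaleR_2)
  done

lemma F_xi: assumes "br c x = F tens e0 p q r s c x" "e0 * c = c" "c * e0 = c"
  shows "br c xi = F tens e0 (-s) (-r) (-q) (-p) c xi"
proof -
  have 1: "br c xi = lm e0 (br c xi)"
    using br_der[of c e0 xi] by simp
  have "0 = lm xi (br c (x * xi))" by simp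
  also have "\<dots> = lm (xi * x) (br c xi) + lm xi (rm (br c x) xi)" by (simp only: br_der lm_add lm_mult)
  finally have "0 = lm (xi * x) (br c xi) + lm xi (rm (br c x) xi)" .
  hence "br c xi = - lm xi (rm (br c x) xi)" using 1 by (simp add: eq_neg_iff_add_eq_0 add.commute)
  thus ?thesis using assms by (simp add: F_def algebra_simps mult.assoc)
qed

lemma G_uw_F: "u \<in> {x, y} \<Longrightarrow> a \<in> {1..d} \<Longrightarrow> br u (w a) = F tens e0 (1/2) 0 (-1/2) 0 u (w a)"
  by (simp add: br_uw F_def algebra_simps)
lemma G_uv_F: "u \<in> {x, y} \<Longrightarrow> a \<in> {1..d} \<Longrightarrow> br u (v a) = F tens e0 0 (1/2) 0 (-1/2) u (v a)"
  by (simp add: br_uv F_def algebra_simps)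
lemma G_mu: assumes "u \<in> {x, y}" "a \<in> {1..d}"
  shows "br (w a * v a) u = F tens e0 (-1/2) (-1/2) (1/2) (1/2) (w a * v a) u"
proof -
  have 1: "br (w a) u = F tens e0 0 (-1/2) (1/2) 0 (w a) u" using F_anti[OF G_uw_F[OF assms]] by simp
  have 2: "br (v a) u = F tens e0 (-1/2) 0 0 (1/2) (v a) u" using F_anti[OF G_uv_F[OF assms]] by simp
  show ?thesis unfolding F_first[OF 1 2] using assms by (simp add: F_def algebra_simps)
qed

lemma ucorner: "u \<in> {x, y} \<Longrightarrow> e0 * u = u \<and> u * e0 = u" by auto

lemma G_tu: assumes "u \<in> {x, y}" "a \<in> {1..d}"
  shows "br (e0 + w a * v a) u = F tens e0 (-1/2) (-1/2) (1/2) (1/2) (e0 + w a * v a) u"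
  using G_mu[OF assms] ucorner[OF assms(1)] assms(2) by (simp add: F_def algebra_simps)

lemma G_tz: assumes "a \<in> {1..d}"
  shows "br (e0 + w a * v a) (y + xi) = F tens e0 (-1/2) (-1/2) (1/2) (1/2) (e0 + w a * v a) (y + xi)"
proof -
  have c: "e0 * (e0 + w a * v a) = e0 + w a * v a" "(e0 + w a * v a) * e0 = e0 + w a * v a"
    using assms by (simp_all add: algebra_simps)
  have "br (e0 + w a * v a) xi = F tens e0 (-1/2) (-1/2) (1/2) (1/2) (e0 + w a * v a) xi"
    using F_xi[OF G_tu[OF _ assms] c] by simp
  thus ?thesis using G_tu[OF _ assms, of y] by (simp add: F_addR)
qed

lemma G_zz: "br (y + xi) (y + xi) = F tens e0 (1/2) (-1/2) 0 0 (y + xi) (y + xi)"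
proof -
  have xx: "br x x = F tens e0 (-1/2) (1/2) 0 0 x x" by (simp add: br_xx F_def algebra_simps)
  have xxi: "br x xi = F tens e0 0 0 (-1/2) (1/2) x xi" using F_xi[OF xx] by simp
  have xix: "br xi x = F tens e0 0 0 (1/2) (-1/2) xi x" using F_anti[OF xxi] by simp
  have xixi: "br xi xi = F tens e0 (1/2) (-1/2) 0 0 xi xi" using F_xi[OF xix] by simp
  have yx: "br y x = - sw (br x y)" by (rule br_anti)
  have yxF: "br y x = - tens e0 e0 + F tens e0 (-1/2) (-1/2) (1/2) (-1/2) y x"
    unfolding yx br_xy by (simp add: F_def algebra_simps)
  have yxi: "br y xi = - lm xi (rm (br y x) xi)"
  proof -
    have 1: "br y xi = lm e0 (br y xi)"
      using br_der[of y e0 xi] by simp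
    have "0 = lm xi (br y (x * xi))" by simp
    also have "\<dots> = lm (xi * x) (br y xi) + lm xi (rm (br y x) xi)" by (simp only: br_der lm_add lm_mult)
    finally have "0 = lm (xi * x) (br y xi) + lm xi (rm (br y x) xi)" .
    thus "br y xi = - lm xi (rm (br y x) xi)" using 1 by (simp add: eq_neg_iff_add_eq_0 add.commute)
  qed
  have xiy: "br xi y = - sw (br y xi)" by (rule br_anti)
  show ?thesis
    apply (rule dbl)
    apply (simp add: xixi xiy yxi yxF br_yy)
    apply (simp add: F_def algebra_simps scaleR_2)
    done
qed


abbreviation SS where "SS n \<equiv> s_elem w v (y + xi) n"
abbreviation tt where "tt n \<equiv> e0 + w n * v n"

lemma tt_c: "n \<in> {1..d} \<Longrightarrow> e0 * tt n = tt n \<and> tt n * e0 = tt n"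
  by (simp add: distrib_left distrib_right mult.assoc)

lemma SS_c: "n \<le> d \<Longrightarrow> e0 * SS n = SS n \<and> SS n * e0 = SS n"
proof (induction n)
  case 0 then show ?case by (simp add: distrib_left distrib_right)
next
  case (Suc n)
  then have h: "e0 * SS n = SS n" "SS n * e0 = SS n" and a: "Suc n \<in> {1..d}" by auto
  have eq: "SS (Suc n) = SS n + w (Suc n) * (v (Suc n) * SS n)" by (simp add: distrib_right mult.assoc)
  have "e0 * SS (Suc n) = e0 * SS n + e0 * (w (Suc n) * (v (Suc n) * SS n))" unfolding eq by (rule distrib_left)
  also have "\<dots> = SS (Suc n)" unfolding eq using h wvc'(1)[OF a] by simp
  finally have 1: "e0 * SS (Suc n) = SS (Suc n)" .
  have "SS (Suc n) * e0 = SS n * e0 + w (Suc n) * (v (Suc n) * (SS n * e0))" unfolding eq by (simp add: distrib_right mult.assoc)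
  also have "\<dots> = SS (Suc n)" unfolding eq using h by simp
  finally show ?case using 1 by simp
qed

lemma SS_step: "Suc n \<le> d \<Longrightarrow> SS (Suc n) = tt (Suc n) * SS n"
proof -
  assume "Suc n \<le> d"
  then have h: "e0 * SS n = SS n" using SS_c[of n] by simp
  have "tt (Suc n) * SS n = e0 * SS n + w (Suc n) * v (Suc n) * SS n" by (rule distrib_right)
  also have "\<dots> = SS (Suc n)" using h by (simp add: distrib_right)
  finally show ?thesis by simp
qed

lemma F_plus_r: "F tens e0 p q r s A B + k *\<^sub>R tens A B = F tens e0 p q (r+k) s A B"
  by (simp add: F_def algebra_simps)
lemma F_plus_s: "F tens e0 p q r s A B + k *\<^sub>R tens B A = F tens e0 p q r (s+k) A B"
  by (simp add: F_def algebra_simps)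

lemma I2: "n \<le> d \<Longrightarrow> \<forall>g. n < g \<and> g \<le> d \<longrightarrow> br (tt g) (SS n) = F tens e0 (-1/2) (-1/2) (1/2) (1/2) (tt g) (SS n)"
proof (induction n)
  case 0 then show ?case using G_tz by simp
next
  case (Suc n)
  show ?case
  proof (intro allI impI)
    fix g assume g: "Suc n < g \<and> g \<le> d"
    have 1: "br (tt g) (tt (Suc n)) = F tens e0 (-1/2) (-1/2) (1/2) (1/2) (tt g) (tt (Suc n))"
      using G_tt2[of g "Suc n"] g by simp
    have 2: "br (tt g) (SS n) = F tens e0 (-1/2) (-1/2) (1/2) (1/2) (tt g) (SS n)"
      using Suc g by simp
    have c: "e0 * SS n = SS n" "tt (Suc n) * e0 = tt (Suc n)" using SS_c[of n] tt_c[of "Suc n"] Suc g by auto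
    show "br (tt g) (SS (Suc n)) = F tens e0 (-1/2) (-1/2) (1/2) (1/2) (tt g) (SS (Suc n))"
      unfolding SS_step[OF Suc.prems] F_second_c[OF 1 2 c] by simp
  qed
qed

lemma I1: "n \<le> d \<Longrightarrow> br (SS n) (SS n) = F tens e0 (1/2) (-1/2) 0 0 (SS n) (SS n)"
proof (induction n)
  case 0 then show ?case using G_zz by simp
next
  case (Suc n)
  let ?a = "tt (Suc n)" and ?b = "SS n"
  have aa: "br ?a ?a = F tens e0 (1/2) (-1/2) 0 0 ?a ?a" using G_tt[of "Suc n"] Suc by simp
  have bb: "br ?b ?b = F tens e0 (1/2) (-1/2) 0 0 ?b ?b" using Suc by simp
  have ab: "br ?a ?b = F tens e0 (-1/2) (-1/2) (1/2) (1/2) ?a ?b" using I2[of n] Suc by simp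
  have ba: "br ?b ?a = F tens e0 (1/2) (1/2) (-1/2) (-1/2) ?b ?a" using F_anti[OF ab] by simp
  have c: "e0 * ?b = ?b" "?a * e0 = ?a" "e0 * ?a = ?a" "?b * e0 = ?b" using SS_c[of n] tt_c[of "Suc n"] Suc by auto
  have aba: "br (?a * ?b) ?a = F tens e0 (1/2) (-1/2) (1/2) (-1/2) (?a * ?b) ?a"
    unfolding F_first_c[OF aa ba c(1,2)] using F_plus_r[of "1/2" "-1/2" 0 "-1/2" "?a * ?b" ?a "1/2"] by simp
  have abb: "br (?a * ?b) ?b = F tens e0 (1/2) (-1/2) (1/2) (-1/2) (?a * ?b) ?b"
    unfolding F_first_c[OF ab bb c(1,2)] using F_plus_s[of "1/2" "-1/2" "1/2" 0 "?a * ?b" ?b "-1/2"] by simp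
  have "br (?a * ?b) (?a * ?b) = F tens e0 (1/2) (-1/2) (1/2) (-1/2) (?a * ?b) (?a * ?b)"
    unfolding F_second_c[OF aba abb c(1,2)] by simp
  also have "\<dots> = F tens e0 (1/2) (-1/2) 0 0 (?a * ?b) (?a * ?b)" by (simp add: F_def)
  finally show ?case unfolding SS_step[OF Suc.prems] .
qed

lemma I3: "n \<le> d \<Longrightarrow> \<forall>b<n. br (SS n) (SS b) = F tens e0 (1/2) (-1/2) (1/2) (-1/2) (SS n) (SS b)"
proof (induction n)
  case 0 then show ?case by simp
next
  case (Suc n)
  show ?case
  proof (intro allI impI)
    fix b assume b: "b < Suc n"
    let ?a = "tt (Suc n)" and ?b = "SS n" and ?c = "SS b"
    have ac: "br ?a ?c = F tens e0 (-1/2) (-1/2) (1/2) (1/2) ?a ?c" using I2[of b] Suc b by simp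
    have c: "e0 * ?b = ?b" "?a * e0 = ?a" using SS_c[of n] tt_c[of "Suc n"] Suc by auto
    have "br (?a * ?b) ?c = F tens e0 (1/2) (-1/2) (1/2) (-1/2) (?a * ?b) ?c"
    proof (cases "b < n")
      case True
      have bc: "br ?b ?c = F tens e0 (1/2) (-1/2) (1/2) (-1/2) ?b ?c" using Suc True by simp
      show ?thesis unfolding F_first_c[OF ac bc c] by simp
    next
      case False
      then have bn: "b = n" using b by simp
      have bc: "br ?b ?c = F tens e0 (1/2) (-1/2) 0 0 ?b ?c" using I1[of n] Suc bn by simp
      show ?thesis unfolding F_first_c[OF ac bc c] using bn
        F_plus_s[of "1/2" "-1/2" "1/2" 0 "?a * ?b" ?b "-1/2"] by simp
    qed
    then show "br (SS (Suc n)) (SS b) = F tens e0 (1/2) (-1/2) (1/2) (-1/2) (SS (Suc n)) (SS b)"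
      unfolding SS_step[OF Suc.prems] .
  qed
qed

lemma main: assumes "\<alpha> \<le> d" "\<beta> \<le> d"
  shows "br (SS \<alpha>) (SS \<beta>) =
           (1/2) *\<^sub>R (tens e0 (SS \<alpha> * SS \<beta>) - tens (SS \<beta> * SS \<alpha>) e0)
         + ((1/2) * osgn \<alpha> \<beta>) *\<^sub>R (tens (SS \<beta>) (SS \<alpha>) - tens (SS \<alpha>) (SS \<beta>))"
proof -
  consider "\<alpha> = \<beta>" | "\<beta> < \<alpha>" | "\<alpha> < \<beta>" by linarith
  then show ?thesis
  proof cases
    case 1 then show ?thesis using I1[of \<alpha>] assms by (simp add: F_def osgn_def algebra_simps)
  next
    case 2 then show ?thesis using I3[of \<alpha>] assms by (simp add: F_def osgn_def algebra_simps)
  next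
    case 3
    have "br (SS \<beta>) (SS \<alpha>) = F tens e0 (1/2) (-1/2) (1/2) (-1/2) (SS \<beta>) (SS \<alpha>)" using I3[of \<beta>] assms 3 by simp
    from F_anti[OF this] 3 show ?thesis by (simp add: F_def osgn_def algebra_simps)
  qed
qed

end

theorem mainTheorem6:
  fixes d :: nat
    and e0 einf x y xi :: "'a::real_algebra_1"
    and v w :: "nat \<Rightarrow> 'a"
    and tens :: "'a \<Rightarrow> 'a \<Rightarrow> 't::real_vector"
    and lm :: "'a \<Rightarrow> 't \<Rightarrow> 't" and rm :: "'t \<Rightarrow> 'a \<Rightarrow> 't" and sw :: "'t \<Rightarrow> 't"
    and br :: "'a \<Rightarrow> 'a \<Rightarrow> 't"
  assumes "d \<ge> 1"
    and "tensor_square tens lm rm sw"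
    and "path_algebra_data d e0 einf x y xi v w"
    and "double_bracket d e0 einf x y v w tens lm rm sw br"
    and "\<alpha> \<le> d" and "\<beta> \<le> d"
  shows "br (s_elem w v (y + xi) \<alpha>) (s_elem w v (y + xi) \<beta>) =
           (1/2) *\<^sub>R (tens e0 (s_elem w v (y + xi) \<alpha> * s_elem w v (y + xi) \<beta>)
                      - tens (s_elem w v (y + xi) \<beta> * s_elem w v (y + xi) \<alpha>) e0)
         + ((1/2) * osgn \<alpha> \<beta>) *\<^sub>R (tens (s_elem w v (y + xi) \<beta>) (s_elem w v (y + xi) \<alpha>)
                      - tens (s_elem w v (y + xi) \<alpha>) (s_elem w v (y + xi) \<beta>))"
proof -
  have S: "setting d e0 einf x y xi v w tens lm rm sw br"
    by (rule setting.intro) (fact assms)+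
  show ?thesis by (rule setting.main[OF S assms(5,6)])
qed

end
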